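(* Let $f:\mathbb{R}^n\to\mathbb{R}^n$ be continuous, let $\Gamma\in\mathbb{R}^{n\times n}$, and let $L=(l_{ij})\in\mathbb{R}^{m\times m}$ be a coupling matrix (i.e. $l_{ij}\ge 0$ for $i\ne j$ and $\sum_{j=1}^m l_{ij}=0$ for every $i$) which is irreducible with $\mathrm{Rank}(L)=m-1$. Consider the coupled system $$\frac{dx_i(t)}{dt}=f(x_i(t))+c\sum_{j=1}^m l_{ij}\Gamma x_j(t),\qquad i=1,\dots,m,$$ with $x_i(t)\in\mathbb{R}^n$ and coupling strength $c>0$. Suppose there exist a positive definite matrix $P\in\mathbb{R}^{n\times n}$, a matrix $\Delta\in\mathbb{R}^{n\times n}$ and $\epsilon>0$ such that $f$ satisfies the QUAD condition $$(x-y)^T P\big\{[f(x)-f(y)]-\Delta(x-y)\big\}\le -\epsilon (x-y)^T(x-y)\quad\text{for all }x,y\in\mathbb{R}^n,$$ that $\mathrm{Ran}(P\Delta)=\mathrm{Ran}(P\Gamma)$ (in particular this holds if $\Delta=\Gamma$), and that $P\Gamma=BB^T$ for some matrix $B$ and $P\Gamma$ is positive definite on the range $\mathrm{Ran}(P\Gamma)$. Then the system reaches synchronization if the coupling strength $c$ is large enough.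
   Context: $\mathrm{Ran}(M)$ denotes the range (column space) of a matrix $M$. "Positive definite on $\mathrm{Ran}(P\Gamma)$" means $u^T P\Gamma u>0$ for every nonzero $u\in\mathrm{Ran}(P\Gamma)$. The system reaches synchronization if $\lim_{t\to\infty}\|x_i(t)-x_j(t)\|=0$ for all $i,j$ and all initial conditions. *)

theory Defs
  imports "HOL-Analysis.Analysis"
begin

definition coupling_matrix :: "real^'m^'m \<Rightarrow> bool" where
  "coupling_matrix L \<longleftrightarrow>
     (\<forall>i j. i \<noteq> j \<longrightarrow> L $ i $ j \<ge> 0) \<and> (\<forall>i. (\<Sum>j\<in>UNIV. L $ i $ j) = 0)"

definition irreducible_mat :: "real^'m^'m \<Rightarrow> bool" where
  "irreducible_mat L \<longleftrightarrow>
     (\<forall>I. I \<noteq> {} \<and> I \<noteq> UNIV \<longrightarrow> (\<exists>i\<in>I. \<exists>j. j \<notin> I \<and> L $ i $ j \<noteq> 0))"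

definition pos_def_mat :: "real^'n^'n \<Rightarrow> bool" where
  "pos_def_mat P \<longleftrightarrow> transpose P = P \<and> (\<forall>x. x \<noteq> 0 \<longrightarrow> x \<bullet> (P *v x) > 0)"

definition Ran :: "real^'n^'m \<Rightarrow> (real^'m) set" where
  "Ran M = range (\<lambda>x. M *v x)"

definition pos_def_on :: "real^'n^'n \<Rightarrow> (real^'n) set \<Rightarrow> bool" where
  "pos_def_on M S \<longleftrightarrow> (\<forall>u\<in>S. u \<noteq> 0 \<longrightarrow> u \<bullet> (M *v u) > 0)"

definition QUAD :: "(real^'n \<Rightarrow> real^'n) \<Rightarrow> real^'n^'n \<Rightarrow> real^'n^'n \<Rightarrow> real \<Rightarrow> bool" where
  "QUAD f P \<Delta> \<epsilon> \<longleftrightarrow> (\<forall>x y. (x - y) \<bullet> (P *v ((f x - f y) - \<Delta> *v (x - y)))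
                          \<le> - \<epsilon> * ((x - y) \<bullet> (x - y)))"

definition coupled_solution ::
  "(real^'n \<Rightarrow> real^'n) \<Rightarrow> real^'n^'n \<Rightarrow> real^'m^'m \<Rightarrow> real \<Rightarrow> (real \<Rightarrow> 'm \<Rightarrow> real^'n) \<Rightarrow> bool" where
  "coupled_solution f \<Gamma> L c x \<longleftrightarrow>
     (\<forall>i. \<forall>t\<ge>0. ((\<lambda>s. x s i) has_vector_derivative
         (f (x t i) + c *\<^sub>R (\<Sum>j\<in>UNIV. L $ i $ j *\<^sub>R (\<Gamma> *v x t j)))) (at t within {0..}))"

definition synchronizes :: "(real \<Rightarrow> 'm \<Rightarrow> real^'n) \<Rightarrow> bool" where
  "synchronizes x \<longleftrightarrow> (\<forall>i j. ((\<lambda>t. norm (x t i - x t j)) \<longlongrightarrow> 0) at_top)"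

end

theory Submission
  imports Defs
begin

lemma left_kernel_nonzero:
  fixes L :: "real^'m^'m"
  assumes "rank L = CARD('m) - 1"
  shows "\<exists>\<xi>::real^'m. \<xi> \<noteq> 0 \<and> (\<forall>j. (\<Sum>i\<in>UNIV. \<xi>$i * L$i$j) = 0)"
proof -
  have "rank L < CARD('m)" using assms by simp
  then have "det L = 0" using det_eq_0_rank by blast
  then have "det (transpose L) = 0" by simp
  then have "\<not> inj ((*v) (transpose L))"
    using det_nz_iff_inj[of "(*v) (transpose L)"] by (simp add: matrix_vector_mul_linear)
  then obtain a b where ab: "a \<noteq> b" "transpose L *v a = transpose L *v b"
    unfolding inj_def by blast
  have "transpose L *v (a - b) = 0" using ab by (simp add: matrix_vector_mult_diff_distrib)
  then have "\<forall>j. (\<Sum>i\<in>UNIV. (a-b)$i * L$i$j) = 0"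
    by (auto simp: matrix_vector_mult_def transpose_def vec_eq_iff mult.commute)
  then show ?thesis using ab by (metis right_minus_eq)
qed

lemma diag_nonpos:
  fixes L :: "real^'m^'m"
  assumes "coupling_matrix L"
  shows "L$j$j = - (\<Sum>k\<in>UNIV-{j}. L$j$k)" "L$j$j \<le> 0"
proof -
  have s: "(\<Sum>k\<in>UNIV. L$j$k) = 0" using assms by (auto simp: coupling_matrix_def)
  have "(\<Sum>k\<in>UNIV. L$j$k) = L$j$j + (\<Sum>k\<in>UNIV-{j}. L$j$k)"
    by (simp add: sum.remove)
  then show 1: "L$j$j = - (\<Sum>k\<in>UNIV-{j}. L$j$k)" using s by linarith
  have "(\<Sum>k\<in>UNIV-{j}. L$j$k) \<ge> 0" using assms unfolding coupling_matrix_def by (intro sum_nonneg) auto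
  then show "L$j$j \<le> 0" using 1 by linarith
qed

lemma abs_left_kernel:
  fixes L :: "real^'m^'m"
  assumes cm: "coupling_matrix L" and k: "\<forall>j. (\<Sum>i\<in>UNIV. \<xi>$i * L$i$j) = 0"
  shows "\<forall>j. (\<Sum>i\<in>UNIV. \<bar>\<xi>$i\<bar> * L$i$j) = 0"
proof -
  have off: "\<And>i j. i \<noteq> j \<Longrightarrow> L$i$j \<ge> 0" using cm by (auto simp: coupling_matrix_def)
  have nn: "(\<Sum>i\<in>UNIV. \<bar>\<xi>$i\<bar> * L$i$j) \<ge> 0" for j
  proof -
    have e1: "(\<Sum>i\<in>UNIV. \<xi>$i * L$i$j) = \<xi>$j * L$j$j + (\<Sum>i\<in>UNIV-{j}. \<xi>$i * L$i$j)"
      by (simp add: sum.remove)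
    have e2: "(\<Sum>i\<in>UNIV. \<bar>\<xi>$i\<bar> * L$i$j) = \<bar>\<xi>$j\<bar> * L$j$j + (\<Sum>i\<in>UNIV-{j}. \<bar>\<xi>$i\<bar> * L$i$j)"
      by (simp add: sum.remove)
    have "\<bar>\<xi>$j * L$j$j\<bar> = \<bar>\<Sum>i\<in>UNIV-{j}. \<xi>$i * L$i$j\<bar>" using e1 k by (metis abs_minus_cancel add_eq_0_iff)
    also have "\<dots> \<le> (\<Sum>i\<in>UNIV-{j}. \<bar>\<xi>$i * L$i$j\<bar>)" by (rule sum_abs)
    also have "\<dots> = (\<Sum>i\<in>UNIV-{j}. \<bar>\<xi>$i\<bar> * L$i$j)"
      by (rule sum.cong) (auto simp: abs_mult off)
    finally have "\<bar>\<xi>$j * L$j$j\<bar> \<le> (\<Sum>i\<in>UNIV-{j}. \<bar>\<xi>$i\<bar> * L$i$j)" .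
    moreover have "\<bar>\<xi>$j * L$j$j\<bar> = - (\<bar>\<xi>$j\<bar> * L$j$j)"
      using diag_nonpos(2)[OF cm, of j] by (simp add: abs_mult)
    ultimately show ?thesis using e2 by linarith
  qed
  have "(\<Sum>j\<in>UNIV. \<Sum>i\<in>UNIV. \<bar>\<xi>$i\<bar> * L$i$j) = (\<Sum>i\<in>UNIV. \<bar>\<xi>$i\<bar> * (\<Sum>j\<in>UNIV. L$i$j))"
    by (subst sum.swap) (simp add: sum_distrib_left)
  also have "\<dots> = 0" using cm by (simp add: coupling_matrix_def)
  finally have "(\<Sum>j\<in>UNIV. \<Sum>i\<in>UNIV. \<bar>\<xi>$i\<bar> * L$i$j) = 0" .
  then show ?thesis using nn by (simp add: sum_nonneg_eq_0_iff)
qed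

lemma nonneg_left_kernel_pos:
  fixes L :: "real^'m^'m"
  assumes cm: "coupling_matrix L" and irr: "irreducible_mat L"
    and k: "\<forall>j. (\<Sum>i\<in>UNIV. \<eta>$i * L$i$j) = 0" and nn: "\<forall>i. \<eta>$i \<ge> 0" and nz: "\<eta> \<noteq> 0"
  shows "\<forall>i. \<eta>$i > 0"
proof (rule ccontr)
  assume "\<not> (\<forall>i. \<eta>$i > 0)"
  define I where "I = {i. \<eta>$i > 0}"
  have off: "\<And>i j. i \<noteq> j \<Longrightarrow> L$i$j \<ge> 0" using cm by (auto simp: coupling_matrix_def)
  have "I \<noteq> UNIV" using \<open>\<not> (\<forall>i. \<eta>$i > 0)\<close> by (auto simp: I_def)
  moreover have "I \<noteq> {}" using nz nn by (auto simp: I_def vec_eq_iff) (metis less_eq_real_def)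
  ultimately obtain i j where ij: "i \<in> I" "j \<notin> I" "L$i$j \<noteq> 0"
    using irr unfolding irreducible_mat_def by blast
  have ej: "\<eta>$j = 0" using ij(2) nn by (auto simp: I_def) (metis less_eq_real_def)
  have ne: "i \<noteq> j" using ij by auto
  have "(\<Sum>i\<in>UNIV. \<eta>$i * L$i$j) = \<eta>$j * L$j$j + (\<Sum>i\<in>UNIV-{j}. \<eta>$i * L$i$j)"
    by (simp add: sum.remove)
  then have z: "(\<Sum>i\<in>UNIV-{j}. \<eta>$i * L$i$j) = 0" using k ej by simp
  have "\<forall>i'\<in>UNIV-{j}. \<eta>$i' * L$i'$j = 0"
    using z by (subst (asm) sum_nonneg_eq_0_iff) (auto simp: nn off)
  then have "\<eta>$i * L$i$j = 0" using ne by auto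
  then show False using ij(1,3) by (auto simp: I_def)
qed

lemma perron_vector:
  fixes L :: "real^'m^'m"
  assumes cm: "coupling_matrix L" and irr: "irreducible_mat L" and r: "rank L = CARD('m) - 1"
  shows "\<exists>\<xi>::real^'m. (\<forall>i. \<xi>$i > 0) \<and> (\<Sum>i\<in>UNIV. \<xi>$i) = 1 \<and> (\<forall>j. (\<Sum>i\<in>UNIV. \<xi>$i * L$i$j) = 0)"
proof -
  obtain \<xi> :: "real^'m" where x: "\<xi> \<noteq> 0" "\<forall>j. (\<Sum>i\<in>UNIV. \<xi>$i * L$i$j) = 0"
    using left_kernel_nonzero[OF r] by blast
  define \<eta> where "\<eta> = (\<chi> i. \<bar>\<xi>$i\<bar>)"
  have k: "\<forall>j. (\<Sum>i\<in>UNIV. \<eta>$i * L$i$j) = 0" using abs_left_kernel[OF cm x(2)] by (simp add: \<eta>_def)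
  have nz: "\<eta> \<noteq> 0" using x(1) by (auto simp: \<eta>_def vec_eq_iff)
  have pos: "\<forall>i. \<eta>$i > 0" by (rule nonneg_left_kernel_pos[OF cm irr k _ nz]) (simp add: \<eta>_def)
  define s where "s = (\<Sum>i\<in>UNIV. \<eta>$i)"
  have "s > 0" unfolding s_def using pos by (simp add: sum_pos)
  show ?thesis
  proof (intro exI conjI allI)
    show "(\<chi> i. \<eta>$i / s)$i > 0" for i using pos \<open>s > 0\<close> by simp
    show "(\<Sum>i\<in>UNIV. (\<chi> i. \<eta>$i / s)$i) = 1" using \<open>s > 0\<close> by (simp add: s_def sum_divide_distrib[symmetric])
    show "(\<Sum>i\<in>UNIV. (\<chi> i. \<eta>$i / s)$i * L$i$j) = 0" for j
      using k by (simp add: sum_divide_distrib[symmetric])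
  qed
qed

lemma inner_BBt:
  fixes B :: "real^'n^'n"
  shows "u \<bullet> ((B ** transpose B) *v v) = (transpose B *v u) \<bullet> (transpose B *v v)"
  by (simp add: matrix_vector_mul_assoc[symmetric] dot_lmul_matrix[symmetric])

lemma lap_sos:
  fixes L :: "real^'m^'m" and z :: "'m \<Rightarrow> 'a::real_inner"
  assumes cm: "coupling_matrix L" and xker: "\<forall>j. (\<Sum>i\<in>UNIV. \<xi>$i * L$i$j) = 0"
  shows "(\<Sum>i\<in>UNIV. \<Sum>j\<in>UNIV. \<xi>$i * L$i$j * (z i \<bullet> z j))
       = -(1/2) * (\<Sum>i\<in>UNIV. \<Sum>j\<in>UNIV. \<xi>$i * L$i$j * (norm (z i - z j))^2)"
proof -
  have n: "(norm (z i - z j))^2 = z i \<bullet> z i + z j \<bullet> z j - 2 * (z i \<bullet> z j)" for i j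
    by (simp add: power2_norm_eq_inner inner_diff inner_commute)
  have s1: "(\<Sum>i\<in>UNIV. \<Sum>j\<in>UNIV. \<xi>$i * L$i$j * (z i \<bullet> z i)) = 0"
  proof -
    have "(\<Sum>i\<in>UNIV. \<Sum>j\<in>UNIV. \<xi>$i * L$i$j * (z i \<bullet> z i))
        = (\<Sum>i\<in>UNIV. \<xi>$i * (z i \<bullet> z i) * (\<Sum>j\<in>UNIV. L$i$j))"
      by (simp add: sum_distrib_left mult_ac)
    also have "\<dots> = 0" using cm by (simp add: coupling_matrix_def)
    finally show ?thesis .
  qed
  have s2: "(\<Sum>i\<in>UNIV. \<Sum>j\<in>UNIV. \<xi>$i * L$i$j * (z j \<bullet> z j)) = 0"
  proof -
    have "(\<Sum>i\<in>UNIV. \<Sum>j\<in>UNIV. \<xi>$i * L$i$j * (z j \<bullet> z j))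
        = (\<Sum>j\<in>UNIV. (z j \<bullet> z j) * (\<Sum>i\<in>UNIV. \<xi>$i * L$i$j))"
      by (subst sum.swap) (simp add: sum_distrib_left mult_ac)
    also have "\<dots> = 0" using xker by simp
    finally show ?thesis .
  qed
  have "(\<Sum>i\<in>UNIV. \<Sum>j\<in>UNIV. \<xi>$i * L$i$j * (norm (z i - z j))^2)
     = (\<Sum>i\<in>UNIV. \<Sum>j\<in>UNIV. \<xi>$i * L$i$j * (z i \<bullet> z i))
       + (\<Sum>i\<in>UNIV. \<Sum>j\<in>UNIV. \<xi>$i * L$i$j * (z j \<bullet> z j))
       - 2 * (\<Sum>i\<in>UNIV. \<Sum>j\<in>UNIV. \<xi>$i * L$i$j * (z i \<bullet> z j))"
    by (simp add: n algebra_simps sum.distrib sum_subtractf sum_distrib_left)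
  then show ?thesis using s1 s2 by simp
qed

lemma lap_term_nonneg:
  fixes L :: "real^'m^'m"
  assumes cm: "coupling_matrix L" and xpos: "\<forall>i. \<xi>$i > 0"
  shows "\<xi>$i * L$i$j * (norm (z i - z j :: 'a::real_normed_vector))^2 \<ge> 0"
proof (cases "i = j")
  case False
  then have "L$i$j \<ge> 0" using cm by (auto simp: coupling_matrix_def)
  then show ?thesis using xpos by (simp add: less_imp_le)
qed simp

lemma lap_zero_const:
  fixes L :: "real^'m^'m" and z :: "'m \<Rightarrow> 'a::real_normed_vector"
  assumes cm: "coupling_matrix L" and irr: "irreducible_mat L" and xpos: "\<forall>i. \<xi>$i > 0"
    and z0: "(\<Sum>i\<in>UNIV. \<Sum>j\<in>UNIV. \<xi>$i * L$i$j * (norm (z i - z j))^2) = 0"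
  shows "z i = z k"
proof -
  have t0: "\<xi>$i * L$i$j * (norm (z i - z j))^2 = 0" for i j
  proof -
    have "\<forall>i\<in>UNIV. (\<Sum>j\<in>UNIV. \<xi>$i * L$i$j * (norm (z i - z j))^2) = 0"
      using z0 by (subst (asm) sum_nonneg_eq_0_iff) (auto intro!: sum_nonneg lap_term_nonneg[OF cm xpos])
    then have "\<forall>j\<in>UNIV. \<xi>$i * L$i$j * (norm (z i - z j))^2 = 0"
      by (subst (asm) sum_nonneg_eq_0_iff) (auto intro!: lap_term_nonneg[OF cm xpos])
    then show ?thesis by blast
  qed
  define I where "I = {i. z i = z k}"
  have "I = UNIV"
  proof (rule ccontr)
    assume "I \<noteq> UNIV"
    moreover have "I \<noteq> {}" by (auto simp: I_def)
    ultimately obtain a b where ab: "a \<in> I" "b \<notin> I" "L$a$b \<noteq> 0"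
      using irr unfolding irreducible_mat_def by blast
    have "\<xi>$a \<noteq> 0" using xpos by (metis less_irrefl)
    then have "z a = z b" using t0[of a b] ab(3) by simp
    then show False using ab by (auto simp: I_def)
  qed
  then show ?thesis by (auto simp: I_def)
qed

definition Aq :: "real^'m \<Rightarrow> real^'n^'n \<Rightarrow> real^'n^'m \<Rightarrow> real" where
  "Aq \<xi> D e = (\<Sum>i\<in>UNIV. \<xi>$i * (e$i \<bullet> (D *v e$i)))"
definition Nq :: "real^'m \<Rightarrow> real^'n^'m \<Rightarrow> real" where
  "Nq \<xi> e = (\<Sum>i\<in>UNIV. \<xi>$i * (e$i \<bullet> e$i))"
definition Gq :: "real^'m \<Rightarrow> real^'m^'m \<Rightarrow> real^'n^'n \<Rightarrow> real^'n^'m \<Rightarrow> real" where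
  "Gq \<xi> L S e = - (\<Sum>i\<in>UNIV. \<Sum>j\<in>UNIV. \<xi>$i * L$i$j * (e$i \<bullet> (S *v e$j)))"

lemma Aq_scale: "Aq \<xi> D (r *\<^sub>R e) = r^2 * Aq \<xi> D e"
  by (simp add: Aq_def matrix_vector_mult_scaleR sum_distrib_left power2_eq_square mult_ac)
lemma Nq_scale: "Nq \<xi> (r *\<^sub>R e) = r^2 * Nq \<xi> e"
  by (simp add: Nq_def sum_distrib_left power2_eq_square mult_ac)
lemma Gq_scale: "Gq \<xi> L S (r *\<^sub>R e) = r^2 * Gq \<xi> L S e"
  by (simp add: Gq_def matrix_vector_mult_scaleR sum_distrib_left power2_eq_square mult_ac)

lemma cont_Aq: "continuous_on X (Aq \<xi> D)"
  unfolding Aq_def by (intro continuous_intros bounded_linear.continuous_on[OF matrix_vector_mul_bounded_linear])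
lemma cont_Nq: "continuous_on X (Nq \<xi>)"
  unfolding Nq_def by (intro continuous_intros bounded_linear.continuous_on[OF matrix_vector_mul_bounded_linear])
lemma cont_Gq: "continuous_on X (Gq \<xi> L S)"
  unfolding Gq_def by (intro continuous_intros bounded_linear.continuous_on[OF matrix_vector_mul_bounded_linear])

lemma Nq_pos:
  assumes xpos: "\<forall>i. \<xi>$i > 0" and "e \<noteq> 0"
  shows "Nq \<xi> e > 0"
proof -
  obtain k where k: "e$k \<noteq> 0" using assms(2) by (auto simp: vec_eq_iff)
  show ?thesis unfolding Nq_def
    proof (rule sum_pos2[where i=k])
    show "0 < \<xi>$k * (e$k \<bullet> e$k)" using xpos k by simp
    show "0 \<le> \<xi>$i * (e$i \<bullet> e$i)" for i using xpos by (simp add: less_imp_le)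
  qed auto
qed

lemma Gq_sos:
  fixes L :: "real^'m^'m" and B :: "real^'n^'n"
  assumes cm: "coupling_matrix L" and xker: "\<forall>j. (\<Sum>i\<in>UNIV. \<xi>$i * L$i$j) = 0"
  shows "Gq \<xi> L (B ** transpose B) e =
     (1/2) * (\<Sum>i\<in>UNIV. \<Sum>j\<in>UNIV. \<xi>$i * L$i$j * (norm (transpose B *v e$i - transpose B *v e$j))^2)"
  unfolding Gq_def inner_BBt
  using lap_sos[OF cm xker, of "\<lambda>i. transpose B *v e$i"] by simp

lemma Gq_nonneg:
  fixes L :: "real^'m^'m" and B :: "real^'n^'n"
  assumes cm: "coupling_matrix L" and xker: "\<forall>j. (\<Sum>i\<in>UNIV. \<xi>$i * L$i$j) = 0"
    and xpos: "\<forall>i. \<xi>$i > 0"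
  shows "Gq \<xi> L (B ** transpose B) e \<ge> 0"
  unfolding Gq_sos[OF cm xker]
  by (intro mult_nonneg_nonneg sum_nonneg lap_term_nonneg[OF cm xpos]) auto

lemma Gq_zero:
  fixes L :: "real^'m^'m" and B :: "real^'n^'n"
  assumes cm: "coupling_matrix L" and irr: "irreducible_mat L" and xker: "\<forall>j. (\<Sum>i\<in>UNIV. \<xi>$i * L$i$j) = 0"
    and xpos: "\<forall>i. \<xi>$i > 0" and xsum: "(\<Sum>i\<in>UNIV. \<xi>$i) = 1"
    and ran: "\<forall>v. \<exists>w. D *v v = (B ** transpose B) *v w"
    and cons: "(\<Sum>i\<in>UNIV. \<xi>$i *\<^sub>R e$i) = 0"
    and g0: "Gq \<xi> L (B ** transpose B) e = 0"
  shows "Aq \<xi> D e = 0"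
proof -
  define z where "z i = transpose B *v e$i" for i
  have s0: "(\<Sum>i\<in>UNIV. \<Sum>j\<in>UNIV. \<xi>$i * L$i$j * (norm (z i - z j))^2) = 0"
    using g0 unfolding Gq_sos[OF cm xker] z_def by simp
  have zc: "z i = z k" for i k by (rule lap_zero_const[OF cm irr xpos s0])
  have "(\<Sum>i\<in>UNIV. \<xi>$i *\<^sub>R z i) = transpose B *v (\<Sum>i\<in>UNIV. \<xi>$i *\<^sub>R e$i)"
    unfolding z_def
    by (simp add: linear_sum[OF matrix_vector_mul_linear] matrix_vector_mult_scaleR)
  also have "\<dots> = 0" using cons by simp
  finally have "(\<Sum>i\<in>UNIV. \<xi>$i *\<^sub>R z i) = 0" .
  moreover have "(\<Sum>i\<in>UNIV. \<xi>$i *\<^sub>R z i) = (\<Sum>i\<in>UNIV. \<xi>$i) *\<^sub>R z k" for k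
    using zc by (simp add: scaleR_sum_left) (metis (no_types, lifting) zc)
  ultimately have z0: "z k = 0" for k using xsum by simp
  have "e$i \<bullet> (D *v e$i) = 0" for i
  proof -
    obtain w where "D *v e$i = (B ** transpose B) *v w" using ran by blast
    then show ?thesis using z0[of i] by (simp add: inner_BBt z_def)
  qed
  then show ?thesis by (simp add: Aq_def)
qed

lemma key_c0:
  fixes L :: "real^'m^'m" and B D :: "real^'n^'n"
  assumes cm: "coupling_matrix L" and irr: "irreducible_mat L" and xker: "\<forall>j. (\<Sum>i\<in>UNIV. \<xi>$i * L$i$j) = 0"
    and xpos: "\<forall>i. \<xi>$i > 0" and xsum: "(\<Sum>i\<in>UNIV. \<xi>$i) = 1"
    and ran: "\<forall>v. \<exists>w. D *v v = (B ** transpose B) *v w"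
    and eps: "\<epsilon> > 0"
  shows "\<exists>c0\<ge>0. \<forall>c\<ge>c0. \<forall>e::real^'n^'m. (\<Sum>i\<in>UNIV. \<xi>$i *\<^sub>R e$i) = 0 \<longrightarrow>
            2 * Aq \<xi> D e - \<epsilon> * Nq \<xi> e \<le> c * Gq \<xi> L (B ** transpose B) e"
proof -
  define F where "F e = 2 * Aq \<xi> D e - \<epsilon> * Nq \<xi> e" for e :: "real^'n^'m"
  define G where "G = Gq \<xi> L (B ** transpose B)"
  define C where "C e = (\<Sum>i\<in>UNIV. \<xi>$i *\<^sub>R e$i)" for e :: "real^'n^'m"
  have contF: "continuous_on X F" for X unfolding F_def
    by (intro continuous_intros cont_Aq cont_Nq)
  have contG: "continuous_on X G" for X unfolding G_def by (rule cont_Gq)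
  have contC: "continuous_on X C" for X unfolding C_def by (intro continuous_intros)
  have Gnn: "G e \<ge> 0" for e unfolding G_def by (rule Gq_nonneg[OF cm xker xpos])
  define S where "S = sphere (0::real^'n^'m) 1 \<inter> {e. C e = 0}"
  define T where "T = S \<inter> {e. 0 \<le> F e}"
  have cS: "compact S" unfolding S_def
    by (intro compact_Int_closed compact_sphere closed_Collect_eq contC continuous_on_const)
  have cT: "compact T" unfolding T_def
    by (intro compact_Int_closed cS closed_Collect_le contF continuous_on_const)
  have Gpos: "G e > 0" if "e \<in> T" for e
  proof (rule ccontr)
    assume "\<not> G e > 0"
    then have "G e = 0" using Gnn[of e] by simp
    then have "Aq \<xi> D e = 0" unfolding G_def
      by (intro Gq_zero[OF cm irr xker xpos xsum ran]) (use that in \<open>auto simp: T_def S_def C_def\<close>)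
    moreover have "e \<noteq> 0" using that by (auto simp: T_def S_def)
    then have "Nq \<xi> e > 0" by (rule Nq_pos[OF xpos])
    ultimately have "F e < 0" using eps by (simp add: F_def)
    then show False using that by (auto simp: T_def)
  qed
  have scale: "F e \<le> c * G e" if cu: "\<And>u. u \<in> S \<Longrightarrow> F u \<le> c * G u" and ce: "C e = 0" for e c
  proof (cases "e = 0")
    case True
    then show ?thesis by (simp add: F_def G_def Aq_def Nq_def Gq_def)
  next
    case False
    define u where "u = (1 / norm e) *\<^sub>R e"
    have "norm u = 1" using False by (simp add: u_def)
    moreover have "C u = 0" proof -
      have "C u = (1 / norm e) *\<^sub>R C e" by (simp add: u_def C_def scaleR_sum_right)
      then show ?thesis using ce by simp
    qed
    ultimately have "u \<in> S" by (simp add: S_def)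
    have eu: "e = norm e *\<^sub>R u" using False by (simp add: u_def)
    have "F e = (norm e)^2 * F u" 
      by (subst eu) (simp add: F_def Aq_scale Nq_scale algebra_simps)
    also have "\<dots> \<le> (norm e)^2 * (c * G u)" using cu[OF \<open>u \<in> S\<close>] by (simp add: mult_left_mono)
    also have "\<dots> = c * G e"
      by (subst (2) eu) (simp add: G_def Gq_scale)
    finally show ?thesis .
  qed
  show ?thesis
  proof (cases "T = {}")
    case True
    show ?thesis
    proof (intro exI[of _ 0] conjI allI impI)
      fix c :: real and e :: "real^'n^'m" assume c: "0 \<le> c" and ce: "(\<Sum>i\<in>UNIV. \<xi>$i *\<^sub>R e$i) = 0"
      have "F u \<le> c * G u" if "u \<in> S" for u
      proof -
        have "F u < 0" using True that by (auto simp: T_def)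
        also have "0 \<le> c * G u" using c Gnn by simp
        finally show ?thesis by simp
      qed
      then have "F e \<le> c * G e" using scale ce by (simp add: C_def)
      then show "2 * Aq \<xi> D e - \<epsilon> * Nq \<xi> e \<le> c * Gq \<xi> L (B ** transpose B) e"
        by (simp add: F_def G_def)
    qed simp
  next
    case False
    obtain xm where xm: "xm \<in> T" "\<forall>y\<in>T. F y \<le> F xm"
      using continuous_attains_sup[OF cT False contF] by blast
    obtain xq where xq: "xq \<in> T" "\<forall>y\<in>T. G xq \<le> G y"
      using continuous_attains_inf[OF cT False contG] by blast
    have q: "G xq > 0" by (rule Gpos[OF xq(1)])
    have M: "F xm \<ge> 0" using xm(1) by (simp add: T_def)
    show ?thesis
    proof (intro exI[of _ "F xm / G xq"] conjI allI impI)
      show "0 \<le> F xm / G xq" using q M by simp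
      fix c :: real and e :: "real^'n^'m" assume c: "F xm / G xq \<le> c" and ce: "(\<Sum>i\<in>UNIV. \<xi>$i *\<^sub>R e$i) = 0"
      have c0: "0 \<le> c" using c q M by (meson divide_nonneg_pos order_trans)
      have "F u \<le> c * G u" if "u \<in> S" for u
      proof (cases "u \<in> T")
        case True
        have "F u \<le> F xm" using xm(2) True by blast
        also have "F xm = (F xm / G xq) * G xq" using q by simp
        also have "\<dots> \<le> c * G xq" using mult_right_mono[OF c, of "G xq"] q by simp
        also have "\<dots> \<le> c * G u" using xq(2) True c0 by (simp add: mult_left_mono)
        finally show ?thesis .
      next
        case False
        have "F u < 0" using False that by (auto simp: T_def)
        also have "0 \<le> c * G u" using c0 Gnn by simp
        finally show ?thesis by simp
      qed
      then have "F e \<le> c * G e" using scale ce by (simp add: C_def)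
      then show "2 * Aq \<xi> D e - \<epsilon> * Nq \<xi> e \<le> c * Gq \<xi> L (B ** transpose B) e"
        by (simp add: F_def G_def)
    qed
  qed
qed

lemma decay:
  fixes V V' :: "real \<Rightarrow> real"
  assumes d: "\<And>t. t \<ge> 0 \<Longrightarrow> (V has_real_derivative V' t) (at t within {0..})"
    and le: "\<And>t. t \<ge> 0 \<Longrightarrow> V' t \<le> - \<delta> * V t"
    and t: "t \<ge> 0"
  shows "V t \<le> V 0 * exp (- \<delta> * t)"
proof -
  define W where "W s = V s * exp (\<delta> * s)" for s
  have dW: "(W has_real_derivative (V' s * exp (\<delta> * s) + V s * (exp (\<delta> * s) * \<delta>))) (at s within {0..})"
    if "s \<ge> 0" for s
    unfolding W_def
    by (rule derivative_eq_intros d[OF that] refl)+ simp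
  have "W t \<le> W 0"
  proof (rule DERIV_nonpos_imp_decreasing_open[OF t])
    fix s :: real assume s: "0 < s" "s < t"
    have "at s within {0..} = at s"
      by (rule at_within_interior) (use s in simp)
    then have "(W has_real_derivative (V' s * exp (\<delta> * s) + V s * (exp (\<delta> * s) * \<delta>))) (at s)"
      using dW[of s] s by simp
    moreover have "V' s * exp (\<delta> * s) + V s * (exp (\<delta> * s) * \<delta>) \<le> 0"
    proof -
      have "V' s * exp (\<delta> * s) + V s * (exp (\<delta> * s) * \<delta>) = (V' s + \<delta> * V s) * exp (\<delta> * s)"
        by (simp add: algebra_simps)
      also have "\<dots> \<le> 0" using le[of s] s by (intro mult_nonpos_nonneg) auto
      finally show ?thesis .
    qed
    ultimately show "\<exists>y. (W has_real_derivative y) (at s) \<and> y \<le> 0" by blast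
  next
    show "continuous_on {0..t} W"
      by (rule continuous_on_subset[OF DERIV_continuous_on[OF dW]]) auto
  qed
  then have "V t * exp (\<delta> * t) \<le> V 0" by (simp add: W_def)
  then have "V t * exp (\<delta> * t) * exp (- \<delta> * t) \<le> V 0 * exp (- \<delta> * t)"
    by (simp add: mult_right_mono)
  then show ?thesis by (simp add: mult.assoc exp_add[symmetric])
qed

lemma sum_inner_zero:
  assumes "(\<Sum>i\<in>UNIV. \<xi>$i *\<^sub>R e i) = 0"
  shows "(\<Sum>i\<in>UNIV. \<xi>$i * (e i \<bullet> y)) = 0"
proof -
  have "(\<Sum>i\<in>UNIV. \<xi>$i * (e i \<bullet> y)) = (\<Sum>i\<in>UNIV. \<xi>$i *\<^sub>R e i) \<bullet> y"
    by (simp add: inner_sum_left)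
  then show ?thesis using assms by simp
qed

lemma deriv_bound:
  fixes f :: "real^'n \<Rightarrow> real^'n" and \<Gamma> P \<Delta> B :: "real^'n^'n" and L :: "real^'m^'m"
    and xs :: "'m \<Rightarrow> real^'n" and \<xi> :: "real^'m"
  assumes quad: "QUAD f P \<Delta> \<epsilon>" and PG: "P ** \<Gamma> = B ** transpose B"
    and cm: "coupling_matrix L" and xsum: "(\<Sum>i\<in>UNIV. \<xi>$i) = 1" and xpos: "\<forall>i. \<xi>$i > 0"
    and key: "2 * Aq \<xi> (P ** \<Delta>) (\<chi> i. xs i - (\<Sum>k\<in>UNIV. \<xi>$k *\<^sub>R xs k))
              - \<epsilon> * Nq \<xi> (\<chi> i. xs i - (\<Sum>k\<in>UNIV. \<xi>$k *\<^sub>R xs k))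
             \<le> (2 * c) * Gq \<xi> L (B ** transpose B) (\<chi> i. xs i - (\<Sum>k\<in>UNIV. \<xi>$k *\<^sub>R xs k))"
  shows "2 * (\<Sum>i\<in>UNIV. \<xi>$i * ((xs i - (\<Sum>k\<in>UNIV. \<xi>$k *\<^sub>R xs k)) \<bullet> (P *v
            ((f (xs i) + c *\<^sub>R (\<Sum>j\<in>UNIV. L$i$j *\<^sub>R (\<Gamma> *v xs j)))
             - (\<Sum>k\<in>UNIV. \<xi>$k *\<^sub>R (f (xs k) + c *\<^sub>R (\<Sum>j\<in>UNIV. L$k$j *\<^sub>R (\<Gamma> *v xs j))))))))
         \<le> - \<epsilon> * Nq \<xi> (\<chi> i. xs i - (\<Sum>k\<in>UNIV. \<xi>$k *\<^sub>R xs k))"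
proof -
  define xb where "xb = (\<Sum>k\<in>UNIV. \<xi>$k *\<^sub>R xs k)"
  define e where "e i = xs i - xb" for i
  define X' where "X' i = f (xs i) + c *\<^sub>R (\<Sum>j\<in>UNIV. L$i$j *\<^sub>R (\<Gamma> *v xs j))" for i
  define m where "m = (\<Sum>k\<in>UNIV. \<xi>$k *\<^sub>R X' k)"
  define S where "S = B ** transpose B"
  have ez: "(\<Sum>i\<in>UNIV. \<xi>$i *\<^sub>R e i) = 0"
  proof -
    have "(\<Sum>i\<in>UNIV. \<xi>$i *\<^sub>R e i) = xb - (\<Sum>i\<in>UNIV. \<xi>$i) *\<^sub>R xb"
      by (simp add: e_def scaleR_diff_right sum_subtractf xb_def scaleR_sum_left)
    then show ?thesis using xsum by simp
  qed
  have s1: "(\<Sum>i\<in>UNIV. \<xi>$i * (e i \<bullet> (P *v (X' i - m)))) = (\<Sum>i\<in>UNIV. \<xi>$i * (e i \<bullet> (P *v X' i)))"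
  proof -
    have "(\<Sum>i\<in>UNIV. \<xi>$i * (e i \<bullet> (P *v (X' i - m))))
        = (\<Sum>i\<in>UNIV. \<xi>$i * (e i \<bullet> (P *v X' i))) - (\<Sum>i\<in>UNIV. \<xi>$i * (e i \<bullet> (P *v m)))"
      by (simp add: matrix_vector_mult_diff_distrib inner_diff_right right_diff_distrib sum_subtractf)
    then show ?thesis using sum_inner_zero[OF ez] by simp
  qed
  have cp: "(\<Sum>j\<in>UNIV. L$i$j *\<^sub>R (\<Gamma> *v xs j)) = (\<Sum>j\<in>UNIV. L$i$j *\<^sub>R (\<Gamma> *v e j))" for i
  proof -
    have "(\<Sum>j\<in>UNIV. L$i$j *\<^sub>R (\<Gamma> *v xs j)) = (\<Sum>j\<in>UNIV. L$i$j *\<^sub>R (\<Gamma> *v e j)) + (\<Sum>j\<in>UNIV. L$i$j) *\<^sub>R (\<Gamma> *v xb)"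
      by (simp add: e_def matrix_vector_mult_diff_distrib scaleR_diff_right sum_subtractf scaleR_sum_left)
    then show ?thesis using cm by (simp add: coupling_matrix_def)
  qed
  have inner_c: "e i \<bullet> (P *v (\<Sum>j\<in>UNIV. L$i$j *\<^sub>R (\<Gamma> *v e j))) = (\<Sum>j\<in>UNIV. L$i$j * (e i \<bullet> (S *v e j)))" for i
    by (simp add: S_def PG[symmetric] matrix_vector_mul_assoc linear_sum[OF matrix_vector_mul_linear]
        matrix_vector_mult_scaleR inner_sum_right)
  have quad_i: "e i \<bullet> (P *v (f (xs i) - f xb)) \<le> e i \<bullet> ((P ** \<Delta>) *v e i) - \<epsilon> * (e i \<bullet> e i)" for i
  proof -
    have "e i \<bullet> (P *v ((f (xs i) - f xb) - \<Delta> *v e i)) \<le> - \<epsilon> * (e i \<bullet> e i)"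
      using quad unfolding QUAD_def e_def by blast
    then show ?thesis
      by (simp add: matrix_vector_mult_diff_distrib inner_diff_right matrix_vector_mul_assoc)
  qed
  have s2: "(\<Sum>i\<in>UNIV. \<xi>$i * (e i \<bullet> (P *v X' i)))
      = (\<Sum>i\<in>UNIV. \<xi>$i * (e i \<bullet> (P *v (f (xs i) - f xb))))
        + c * (\<Sum>i\<in>UNIV. \<Sum>j\<in>UNIV. \<xi>$i * L$i$j * (e i \<bullet> (S *v e j)))"
  proof -
    have "(\<Sum>i\<in>UNIV. \<xi>$i * (e i \<bullet> (P *v X' i)))
      = (\<Sum>i\<in>UNIV. \<xi>$i * (e i \<bullet> (P *v (f (xs i) - f xb))))
        + (\<Sum>i\<in>UNIV. \<xi>$i * (e i \<bullet> (P *v f xb)))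
        + c * (\<Sum>i\<in>UNIV. \<Sum>j\<in>UNIV. \<xi>$i * L$i$j * (e i \<bullet> (S *v e j)))"
      unfolding X'_def cp
      by (simp add: matrix_vector_right_distrib matrix_vector_mult_diff_distrib matrix_vector_mult_scaleR
          inner_add_right inner_diff_right inner_c distrib_left right_diff_distrib sum.distrib sum_subtractf
          sum_distrib_left mult_ac)
    then show ?thesis using sum_inner_zero[OF ez] by simp
  qed
  have s3: "(\<Sum>i\<in>UNIV. \<xi>$i * (e i \<bullet> (P *v (f (xs i) - f xb))))
      \<le> Aq \<xi> (P ** \<Delta>) (\<chi> i. e i) - \<epsilon> * Nq \<xi> (\<chi> i. e i)"
  proof -
    have "(\<Sum>i\<in>UNIV. \<xi>$i * (e i \<bullet> (P *v (f (xs i) - f xb))))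
       \<le> (\<Sum>i\<in>UNIV. \<xi>$i * (e i \<bullet> ((P ** \<Delta>) *v e i) - \<epsilon> * (e i \<bullet> e i)))"
      by (intro sum_mono mult_left_mono quad_i) (use xpos in \<open>auto intro: less_imp_le\<close>)
    also have "\<dots> = Aq \<xi> (P ** \<Delta>) (\<chi> i. e i) - \<epsilon> * Nq \<xi> (\<chi> i. e i)"
      by (simp add: Aq_def Nq_def right_diff_distrib sum_subtractf sum_distrib_left mult_ac)
    finally show ?thesis .
  qed
  have g: "Gq \<xi> L S (\<chi> i. e i) = - (\<Sum>i\<in>UNIV. \<Sum>j\<in>UNIV. \<xi>$i * L$i$j * (e i \<bullet> (S *v e j)))"
    by (simp add: Gq_def)
  have key': "2 * Aq \<xi> (P ** \<Delta>) (\<chi> i. e i) - \<epsilon> * Nq \<xi> (\<chi> i. e i) \<le> (2 * c) * Gq \<xi> L S (\<chi> i. e i)"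
    using key by (simp add: e_def xb_def S_def)
  have "2 * (\<Sum>i\<in>UNIV. \<xi>$i * (e i \<bullet> (P *v (X' i - m)))) \<le> - \<epsilon> * Nq \<xi> (\<chi> i. e i)"
  proof -
    define G where "G = Gq \<xi> L S (\<chi> i. e i)"
    have a: "c * (\<Sum>i\<in>UNIV. \<Sum>j\<in>UNIV. \<xi>$i * L$i$j * (e i \<bullet> (S *v e j))) = - (c * G)"
      using g by (simp add: G_def)
    have b: "(2 * c) * G = 2 * (c * G)" by simp
    show ?thesis using s1 s2 s3 key' a b unfolding G_def[symmetric] by linarith
  qed
  then show ?thesis by (simp add: e_def xb_def X'_def m_def)
qed

lemma posdef_lower:
  fixes P :: "real^'n^'n"
  assumes "pos_def_mat P"
  shows "\<exists>pm>0. \<forall>v. pm * (v \<bullet> v) \<le> v \<bullet> (P *v v)"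
proof -
  have pd: "\<And>v. v \<noteq> 0 \<Longrightarrow> v \<bullet> (P *v v) > 0" using assms by (auto simp: pos_def_mat_def)
  have ne: "sphere (0::real^'n) 1 \<noteq> {}"
    using norm_axis_1 by (metis mem_sphere_0 empty_iff)
  have cont: "continuous_on (sphere 0 1) (\<lambda>v::real^'n. v \<bullet> (P *v v))"
    by (intro continuous_intros bounded_linear.continuous_on[OF matrix_vector_mul_bounded_linear])
  obtain v0 where v0: "v0 \<in> sphere 0 1" "\<forall>y\<in>sphere 0 1. v0 \<bullet> (P *v v0) \<le> y \<bullet> (P *v y)"
    using continuous_attains_inf[OF compact_sphere ne cont] by blast
  have pos: "v0 \<bullet> (P *v v0) > 0" using v0(1) pd[of v0] by (metis mem_sphere_0 norm_zero zero_neq_one)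
  show ?thesis
  proof (intro exI conjI allI)
    show "v0 \<bullet> (P *v v0) > 0" by (rule pos)
    fix v :: "real^'n"
    show "v0 \<bullet> (P *v v0) * (v \<bullet> v) \<le> v \<bullet> (P *v v)"
    proof (cases "v = 0")
      case False
      define u where "u = (1 / norm v) *\<^sub>R v"
      have "u \<in> sphere 0 1" using False by (simp add: u_def)
      then have le: "v0 \<bullet> (P *v v0) \<le> u \<bullet> (P *v u)" using v0(2) by blast
      have eu: "v = norm v *\<^sub>R u" using False by (simp add: u_def)
      have "v \<bullet> (P *v v) = (norm v)^2 * (u \<bullet> (P *v u))"
        by (subst (1 2) eu) (simp add: matrix_vector_mult_scaleR power2_eq_square)
      moreover have "v \<bullet> v = (norm v)^2" by (simp add: power2_norm_eq_inner)
      ultimately show ?thesis using mult_right_mono[OF le zero_le_power2[of "norm v"]] by (simp add: mult.commute)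
    qed simp
  qed
qed

lemma upper_quad:
  fixes P :: "real^'n^'n"
  shows "\<exists>K>0. \<forall>v. v \<bullet> (P *v v) \<le> K * (v \<bullet> v)"
proof -
  obtain K where K: "K > 0" "\<forall>x. norm (P *v x) \<le> norm x * K"
    using bounded_linear.pos_bounded[OF matrix_vector_mul_bounded_linear] by blast
  show ?thesis
  proof (intro exI conjI allI)
    fix v :: "real^'n"
    have "v \<bullet> (P *v v) \<le> norm v * norm (P *v v)" by (rule norm_cauchy_schwarz)
    also have "\<dots> \<le> norm v * (norm v * K)" using K by (simp add: mult_left_mono)
    also have "\<dots> = K * (v \<bullet> v)" by (simp add: power2_norm_eq_inner[symmetric] power2_eq_square)
    finally show "v \<bullet> (P *v v) \<le> K * (v \<bullet> v)" .
  qed (rule K(1))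
qed

lemma sym_inner:
  fixes P :: "real^'n^'n"
  assumes "transpose P = P"
  shows "u \<bullet> (P *v w) = w \<bullet> (P *v u)"
proof -
  have "u \<bullet> (P *v w) = (u v* P) \<bullet> w" by (simp add: dot_lmul_matrix)
  also have "u v* P = transpose P *v u" by simp
  finally show ?thesis using assms by (simp add: inner_commute)
qed

lemma centered_zero:
  assumes "(\<Sum>i\<in>UNIV. \<xi>$i) = (1::real)"
  shows "(\<Sum>i\<in>UNIV. \<xi>$i *\<^sub>R (xs i - (\<Sum>k\<in>UNIV. \<xi>$k *\<^sub>R xs k))) = (0::'a::real_vector)"
proof -
  have "(\<Sum>i\<in>UNIV. \<xi>$i *\<^sub>R (xs i - (\<Sum>k\<in>UNIV. \<xi>$k *\<^sub>R xs k)))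
      = (\<Sum>k\<in>UNIV. \<xi>$k *\<^sub>R xs k) - (\<Sum>i\<in>UNIV. \<xi>$i) *\<^sub>R (\<Sum>k\<in>UNIV. \<xi>$k *\<^sub>R xs k)"
    by (simp add: scaleR_diff_right sum_subtractf scaleR_sum_left)
  then show ?thesis using assms by simp
qed

lemma exp_decay_lim:
  assumes "\<delta> > (0::real)"
  shows "((\<lambda>t. a * exp (- \<delta> * t)) \<longlongrightarrow> 0) at_top"
proof -
  have "filterlim (\<lambda>t. \<delta> * t) at_top at_top"
    using assms by (intro filterlim_tendsto_pos_mult_at_top[OF tendsto_const] filterlim_ident) auto
  then have "filterlim (\<lambda>t. exp (\<delta> * t)) at_top at_top"
    by (rule filterlim_compose[OF exp_at_top])
  then have "((\<lambda>t. inverse (exp (\<delta> * t))) \<longlongrightarrow> 0) at_top"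
    by (rule tendsto_inverse_0_at_top)
  then have "((\<lambda>t. a * inverse (exp (\<delta> * t))) \<longlongrightarrow> a * 0) at_top"
    by (intro tendsto_mult tendsto_const)
  then show ?thesis by (simp add: exp_minus)
qed

theorem proposition1:
  fixes f :: "real^'n \<Rightarrow> real^'n"
    and \<Gamma> P \<Delta> B :: "real^'n^'n"
    and L :: "real^'m^'m"
    and \<epsilon> :: real
  assumes "continuous_on UNIV f"
    and "coupling_matrix L"
    and "irreducible_mat L"
    and "rank L = CARD('m) - 1"
    and "pos_def_mat P"
    and "\<epsilon> > 0"
    and "QUAD f P \<Delta> \<epsilon>"
    and "Ran (P ** \<Delta>) = Ran (P ** \<Gamma>)"
    and "P ** \<Gamma> = B ** transpose B"
    and "pos_def_on (P ** \<Gamma>) (Ran (P ** \<Gamma>))"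
  shows "\<exists>c0. \<forall>c>c0. \<forall>x. coupled_solution f \<Gamma> L c x \<longrightarrow> synchronizes x"
proof -
  note cm = assms(2) and irr = assms(3) and eps = assms(6) and quad = assms(7) and PG = assms(9)
  obtain \<xi> :: "real^'m" where xpos: "\<forall>i. \<xi>$i > 0" and xsum: "(\<Sum>i\<in>UNIV. \<xi>$i) = 1"
    and xker: "\<forall>j. (\<Sum>i\<in>UNIV. \<xi>$i * L$i$j) = 0"
    using perron_vector[OF assms(2,3,4)] by blast
  have ran: "\<forall>v. \<exists>w. (P ** \<Delta>) *v v = (B ** transpose B) *v w"
  proof
    fix v
    have "(P ** \<Delta>) *v v \<in> Ran (P ** \<Delta>)" by (simp add: Ran_def)
    then show "\<exists>w. (P ** \<Delta>) *v v = (B ** transpose B) *v w"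
      using assms(8) PG by (auto simp: Ran_def)
  qed
  obtain c0 where c0: "c0 \<ge> 0" and key: "\<And>c e. c \<ge> c0 \<Longrightarrow> (\<Sum>i\<in>UNIV. \<xi>$i *\<^sub>R e$i) = 0 \<Longrightarrow>
      2 * Aq \<xi> (P ** \<Delta>) e - \<epsilon> * Nq \<xi> e \<le> c * Gq \<xi> L (B ** transpose B) (e::real^'n^'m)"
    using key_c0[OF cm irr xker xpos xsum ran eps] by blast
  obtain pm where pm: "pm > 0" "\<And>v. pm * (v \<bullet> v) \<le> v \<bullet> (P *v v)"
    using posdef_lower[OF assms(5)] by blast
  obtain K where K: "K > 0" "\<And>v. v \<bullet> (P *v v) \<le> K * (v \<bullet> v)"
    using upper_quad[of P] by blast
  have Psym: "transpose P = P" using assms(5) by (simp add: pos_def_mat_def)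
  show ?thesis
  proof (intro exI[of _ "c0 / 2"] allI impI)
    fix c :: real and x :: "real \<Rightarrow> 'm \<Rightarrow> real^'n"
    assume c: "c > c0 / 2" and sol: "coupled_solution f \<Gamma> L c x"
    define X' where "X' t i = f (x t i) + c *\<^sub>R (\<Sum>j\<in>UNIV. L$i$j *\<^sub>R (\<Gamma> *v x t j))" for t i
    define xb where "xb t = (\<Sum>k\<in>UNIV. \<xi>$k *\<^sub>R x t k)" for t
    define e where "e t i = x t i - xb t" for t i
    define E where "E t i = X' t i - (\<Sum>k\<in>UNIV. \<xi>$k *\<^sub>R X' t k)" for t i
    define V where "V t = (\<Sum>i\<in>UNIV. \<xi>$i * (e t i \<bullet> (P *v e t i)))" for t
    define V' where "V' t = (\<Sum>i\<in>UNIV. \<xi>$i * (e t i \<bullet> (P *v E t i) + E t i \<bullet> (P *v e t i)))" for t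
    define N where "N t = Nq \<xi> (\<chi> i. e t i)" for t
    define \<delta> where "\<delta> = \<epsilon> / K"
    have dx: "((\<lambda>s. x s i) has_vector_derivative X' t i) (at t within {0..})" if "t \<ge> 0" for t i
      using sol that unfolding coupled_solution_def X'_def by blast
    have de: "((\<lambda>s. e s i) has_vector_derivative E t i) (at t within {0..})" if "t \<ge> 0" for t i
      unfolding e_def xb_def E_def
      by (intro has_vector_derivative_diff dx[OF that] has_vector_derivative_sum
          bounded_linear.has_vector_derivative[OF bounded_linear_scaleR_right])
    have dq: "((\<lambda>s. e s i \<bullet> (P *v e s i)) has_vector_derivative
               (e t i \<bullet> (P *v E t i) + E t i \<bullet> (P *v e t i))) (at t within {0..})" if "t \<ge> 0" for t i
      by (rule bounded_bilinear.has_vector_derivative[OF bounded_bilinear_inner de[OF that]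
            bounded_linear.has_vector_derivative[OF matrix_vector_mul_bounded_linear de[OF that]]])
    have dV: "(V has_real_derivative V' t) (at t within {0..})" if "t \<ge> 0" for t
      unfolding has_real_derivative_iff_has_vector_derivative V_def V'_def
      by (intro has_vector_derivative_sum bounded_linear.has_vector_derivative[OF bounded_linear_mult_right] dq[OF that])
    have Nnn: "N t \<ge> 0" for t
      unfolding N_def Nq_def using xpos by (intro sum_nonneg mult_nonneg_nonneg) (auto intro: less_imp_le)
    have VK: "V t \<le> K * N t" for t
    proof -
      have "V t \<le> (\<Sum>i\<in>UNIV. \<xi>$i * (K * (e t i \<bullet> e t i)))"
        unfolding V_def using xpos K(2) by (intro sum_mono mult_left_mono) (auto intro: less_imp_le)
      also have "\<dots> = K * N t" by (simp add: N_def Nq_def sum_distrib_left mult_ac)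
      finally show ?thesis .
    qed
    have V'le: "V' t \<le> - \<delta> * V t" if "t \<ge> 0" for t
    proof -
      have "V' t = 2 * (\<Sum>i\<in>UNIV. \<xi>$i * (e t i \<bullet> (P *v E t i)))"
        unfolding V'_def using sym_inner[OF Psym, of "E t _" "e t _"]
        by (simp add: sum_distrib_left algebra_simps)
      also have "\<dots> \<le> - \<epsilon> * N t"
      proof -
        have cz: "(\<Sum>i\<in>UNIV. \<xi>$i *\<^sub>R (\<chi> i. x t i - (\<Sum>k\<in>UNIV. \<xi>$k *\<^sub>R x t k))$i) = 0"
          using centered_zero[OF xsum, of "x t"] by simp
        have "2 * c \<ge> c0" using c by simp
        note k = key[OF this cz]
        show ?thesis
          using deriv_bound[OF quad PG cm xsum xpos k]
          by (simp add: N_def e_def xb_def E_def X'_def)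
      qed
      also have "\<dots> \<le> - \<delta> * V t"
      proof -
        have "\<delta> * V t \<le> \<delta> * (K * N t)" using mult_left_mono[OF VK[of t], of \<delta>] eps K(1) by (simp add: \<delta>_def)
        also have "\<dots> = \<epsilon> * N t" using K(1) by (simp add: \<delta>_def)
        finally show ?thesis by simp
      qed
      finally show ?thesis .
    qed
    have dpos: "\<delta> > 0" using eps K(1) by (simp add: \<delta>_def)
    have Vdec: "V t \<le> V 0 * exp (- \<delta> * t)" if "t \<ge> 0" for t
      by (rule decay[OF dV V'le that])
    have low: "pm * \<xi>$i * (norm (e t i))^2 \<le> V t" for t i
    proof -
      have tnn: "0 \<le> \<xi>$j * (e t j \<bullet> (P *v e t j))" for j
      proof -
        have "0 \<le> pm * (e t j \<bullet> e t j)" using pm(1) by simp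
        also have "\<dots> \<le> e t j \<bullet> (P *v e t j)" by (rule pm(2))
        finally show ?thesis using xpos by (simp add: less_imp_le)
      qed
      have "pm * \<xi>$i * (norm (e t i))^2 = \<xi>$i * (pm * (e t i \<bullet> e t i))"
        by (simp add: power2_norm_eq_inner mult_ac)
      also have "\<dots> \<le> \<xi>$i * (e t i \<bullet> (P *v e t i))"
        using pm(2) xpos by (simp add: mult_left_mono less_imp_le)
      also have "\<dots> \<le> V t" unfolding V_def
        by (rule member_le_sum) (use tnn in auto)
      finally show ?thesis .
    qed
    have elim: "((\<lambda>t. e t i) \<longlongrightarrow> 0) at_top" for i
    proof -
      have cpos: "pm * \<xi>$i > 0" using pm(1) xpos by simp
      have "((\<lambda>t. (V 0 / (pm * \<xi>$i)) * exp (- \<delta> * t)) \<longlongrightarrow> 0) at_top"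
        by (rule exp_decay_lim[OF dpos])
      moreover have ev: "eventually (\<lambda>t. (norm (e t i))^2 \<le> (V 0 / (pm * \<xi>$i)) * exp (- \<delta> * t)) at_top"
      proof (rule eventually_at_top_linorderI[of 0])
        fix t :: real assume t: "t \<ge> 0"
        have "pm * \<xi>$i * (norm (e t i))^2 \<le> V 0 * exp (- \<delta> * t)"
          using low[where t=t and i=i] Vdec[OF t] by linarith
        then show "(norm (e t i))^2 \<le> (V 0 / (pm * \<xi>$i)) * exp (- \<delta> * t)"
          using cpos by (simp add: field_simps)
      qed
      ultimately have "((\<lambda>t. (norm (e t i))^2) \<longlongrightarrow> 0) at_top"
        using tendsto_sandwich[OF always_eventually[of "\<lambda>t. (0::real) \<le> (norm (e t i))^2"] ev tendsto_const]
        by simp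
      then have "((\<lambda>t. sqrt ((norm (e t i))^2)) \<longlongrightarrow> sqrt 0) at_top"
        by (rule tendsto_real_sqrt)
      then have "((\<lambda>t. norm (e t i)) \<longlongrightarrow> 0) at_top" by simp
      then show ?thesis by (simp add: tendsto_norm_zero_iff)
    qed
    show "synchronizes x"
      unfolding synchronizes_def
    proof (intro allI)
      fix i j
      have "((\<lambda>t. e t i - e t j) \<longlongrightarrow> 0 - 0) at_top"
        by (intro tendsto_diff elim)
      then have "((\<lambda>t. norm (e t i - e t j)) \<longlongrightarrow> 0) at_top"
        by (simp add: tendsto_norm_zero)
      then show "((\<lambda>t. norm (x t i - x t j)) \<longlongrightarrow> 0) at_top"
        by (simp add: e_def)
    qed
  qed
qed

end
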